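(* Let $L\ge2$ and let $C'=(\{0,\dots,L-1\},\delta')$ be a cellular automaton with neighborhood size $1$ and blank symbol $0$ (i.e. $\delta'(0,0,0)=0$). Define $\varphi(a)=1^{1+L-a}0^a1\in\{0,1\}^{L+2}$ for $a\in\{0,\dots,L-1\}$, and extend $\varphi$ to configurations $c:\mathbb{Z}\to\{0,\dots,L-1\}$ by $\varphi(c)(q(L+2)+k)=$ the $k$-th bit ($0\le k<L+2$, counting from $0$) of $\varphi(c(q))$. Let $r=2(L+2)$. Then there exists $\delta^{(2)}:\{0,1\}^{2r+1}\to\{0,1\}$ with $\delta^{(2)}(1,\dots,1)=1$ such that the binary cellular automaton $(\{0,1\},\delta^{(2)})$, started from $b_0=\varphi(c_0)$ where $c_0(u)=1$ if $u=0$ and $c_0(u)=0$ otherwise, produces configurations $b_0,b_1,\dots$ with $b_t=\varphi(c_t)$ for all $t\ge0$, where $c_0,c_1,\dots$ are the configurations produced by $C'$ from $c_0$.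
   Context: A cellular automaton $(A,\delta)$ with neighborhood size $r$ acts on configurations $c:\mathbb{Z}\to A$; one step maps $c$ to $c'$ with $c'(u)=\delta(c(u-r),\dots,c(u),\dots,c(u+r))$. *)

theory Defs
  imports Main
begin

definition ca_step :: "nat \<Rightarrow> ('a list \<Rightarrow> 'a) \<Rightarrow> (int \<Rightarrow> 'a) \<Rightarrow> (int \<Rightarrow> 'a)" where
  "ca_step r \<delta> c u = \<delta> (map (\<lambda>i. c (u + i)) [- int r .. int r])"

definition ca_run :: "nat \<Rightarrow> ('a list \<Rightarrow> 'a) \<Rightarrow> (int \<Rightarrow> 'a) \<Rightarrow> nat \<Rightarrow> (int \<Rightarrow> 'a)" where
  "ca_run r \<delta> c0 t = (ca_step r \<delta> ^^ t) c0"

definition phi_sym :: "nat \<Rightarrow> nat \<Rightarrow> bool list" where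
  "phi_sym L a = replicate (1 + L - a) True @ replicate a False @ [True]"

definition phi_conf :: "nat \<Rightarrow> (int \<Rightarrow> nat) \<Rightarrow> (int \<Rightarrow> bool)" where
  "phi_conf L c n = phi_sym L (c (n div int (L + 2))) ! nat (n mod int (L + 2))"

end

theory Submission imports Defs begin

lemma modL: assumes "(x::int) mod (int L + 2) = int L" "-1 \<le> x" "x \<le> 2 * int L + 1" shows "x = int L"
proof -
  have P: "(0::int) < int L + 2" by simp
  consider "x = -1" | "0 \<le> x \<and> x < int L + 2" | "int L + 2 \<le> x \<and> x < 2*(int L + 2)" using assms by (smt (verit))
  then show ?thesis
  proof cases
    case 1
    have "(-1::int) mod (int L + 2) = int L + 1"
      by (simp add: zmod_minus1)
    then show ?thesis using assms 1 by simp
  next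
    case 2 then show ?thesis using assms by simp
  next
    case 3
    have "x mod (int L + 2) = x - (int L + 2)"
      using 3 by (metis add_diff_cancel_left' assms(1) diff_add_cancel diff_ge_0_iff_ge mod_add_self1 mod_pos_pos_trivial mult_2 add_less_cancel_right diff_less_eq)
    then show ?thesis using assms 3 by simp
  qed
qed

lemma phi_sym_nth: "a \<le> L \<Longrightarrow> j < L+2 \<Longrightarrow> phi_sym L a ! j = (j < 1+L-a \<or> j = L+1)"
  by (auto simp: phi_sym_def nth_append)

lemma phi_conf_blk: "0 \<le> j \<Longrightarrow> j < int L + 2 \<Longrightarrow> phi_conf L c ((int L + 2)*q + j) = phi_sym L (c q) ! nat j"
proof -
  have e: "int (L+2) = int L + 2" by simp
  assume "0 \<le> j" "j < int L + 2"
  then show ?thesis by (simp only: phi_conf_def e) simp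
qed

lemma zero01:
  assumes v: "\<forall>u. c u < L" and f: "\<not> phi_conf L c m" and t: "phi_conf L c (m+1)"
  shows "m mod (int L + 2) = int L"
proof -
  define q where "q = m div (int L + 2)"
  define j where "j = m mod (int L + 2)"
  have m: "m = (int L + 2)*q + j" by (simp add: q_def j_def)
  have j0: "0 \<le> j" "j < int L + 2" by (simp_all add: j_def)
  have cq: "c q \<le> L" using v less_imp_le by blast
  have f': "\<not> (nat j < 1 + L - c q \<or> nat j = L+1)"
    using f phi_conf_blk[OF j0, of c q] phi_sym_nth[OF cq, of "nat j"] j0 m by simp
  hence jL: "j \<le> int L" using j0 by linarith
  have m1: "m + 1 = (int L + 2)*q + (j+1)" using m by simp
  have t': "nat (j+1) < 1 + L - c q \<or> nat (j+1) = L+1"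
    using t phi_conf_blk[of "j+1" L c q] phi_sym_nth[OF cq, of "nat (j+1)"] j0 jL m1 by simp
  from f' t' j0 jL have "j = int L" by linarith
  thus ?thesis by (simp add: j_def)
qed

lemma phi_sym_inj:
  assumes "a < L" "b < L" "\<forall>j<L+2. phi_sym L a ! j = phi_sym L b ! j"
  shows "a = b"
proof -
  have h: "\<forall>j<L+2. (j<1+L-a \<or> j=L+1) = (j<1+L-b \<or> j=L+1)"
    using assms phi_sym_nth[of a L] phi_sym_nth[of b L] by simp
  have "L - a < L + 2" "L - b < L+2" by auto
  from h[rule_format, OF this(1)] h[rule_format, OF this(2)] assms(1,2) show ?thesis by linarith
qed

lemma step_eq: "ca_step 1 \<delta> c u = \<delta> [c(u-1), c u, c(u+1)]"
proof -
  have "[- int 1 .. int 1] = [-1,0,1]" by (simp add: upto.simps)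
  thus ?thesis by (simp add: ca_step_def)
qed

lemma win:
  assumes "map f [-r..r] = map g [-r..r]" "-r \<le> i" "i \<le> (r::int)"
  shows "f i = g i"
  using assms by (simp add: map_eq_conv)


lemma keyA:
  fixes c c' :: "int \<Rightarrow> nat"
  assumes v: "\<forall>u. c u < L" and v': "\<forall>u. c' u < L"
    and k: "0 \<le> k" "k < int L + 2" and k': "0 \<le> k'" "k' < int L + 2"
    and hw: "\<And>i. -2*(int L+2) \<le> i \<Longrightarrow> i \<le> 2*(int L+2) \<Longrightarrow>
              phi_conf L c ((int L+2)*q+k+i) = phi_conf L c' ((int L+2)*q'+k'+i)"
    and d: "d \<in> {-1,0,1}" and nz: "c (q+d) \<noteq> 0"
  shows "k = k' \<and> c(q-1) = c'(q'-1) \<and> c q = c' q' \<and> c(q+1) = c'(q'+1)"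
proof -
  have a: "1 \<le> c(q+d)" "c(q+d) < L" using nz v by (auto simp: less_imp_le)
  have f: "\<not> phi_conf L c ((int L+2)*(q+d) + int L)"
    using phi_conf_blk[of "int L" L c "q+d"] phi_sym_nth[of "c(q+d)" L L] a by simp
  have t: "phi_conf L c ((int L+2)*(q+d) + (int L+1))"
    using phi_conf_blk[of "int L + 1" L c "q+d"] phi_sym_nth[of "c(q+d)" L "L+1"] a
    by (simp add: nat_add_distrib)
  define i where "i = (int L + 2)*d + int L - k"
  have e1: "(int L+2)*(q+d) + int L = (int L+2)*q+k+i" by (simp add: i_def algebra_simps)
  have e2: "(int L+2)*(q+d) + (int L+1) = (int L+2)*q+k+(i+1)" by (simp add: i_def algebra_simps)
  have b1: "-2*(int L+2) \<le> i" "i \<le> 2*(int L+2)" using d k by (auto simp: i_def)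
  have b2: "-2*(int L+2) \<le> i+1" "i+1 \<le> 2*(int L+2)" using d k by (auto simp: i_def)
  have f': "\<not> phi_conf L c' ((int L+2)*q'+k'+i)" using hw[OF b1] f e1 by simp
  have t': "phi_conf L c' ((int L+2)*q'+k'+i+1)" using hw[OF b2] t e2 by (simp add: add.assoc)
  have m: "((int L+2)*q'+k'+i) mod (int L+2) = int L" using zero01[OF v' f' t'] .
  have "(int L+2)*q'+k'+i = (k'-k+int L) + (int L+2)*(q'+d)" by (simp add: i_def algebra_simps)
  with m have "(k'-k+int L) mod (int L+2) = int L" by simp
  from modL[OF this] k k' have kk: "k = k'" by linarith
  have blkeq: "c(q+e) = c'(q'+e)" if e: "e \<in> {-1,0,1}" for e
  proof -
    have "\<forall>j<L+2. phi_sym L (c(q+e)) ! j = phi_sym L (c'(q'+e)) ! j"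
    proof (intro allI impI)
      fix j assume j: "j < L+2"
      define i where "i = (int L+2)*e + int j - k"
      have "(int L+2)*q+k+i = (int L+2)*(q+e) + int j" "(int L+2)*q'+k'+i = (int L+2)*(q'+e) + int j"
        using kk by (simp_all add: i_def algebra_simps)
      moreover have "-2*(int L+2) \<le> i" "i \<le> 2*(int L+2)" using e k j by (auto simp: i_def)
      ultimately have "phi_conf L c ((int L+2)*(q+e) + int j) = phi_conf L c' ((int L+2)*(q'+e) + int j)"
        using hw by metis
      then show "phi_sym L (c(q+e)) ! j = phi_sym L (c'(q'+e)) ! j"
        using phi_conf_blk[of "int j" L c "q+e"] phi_conf_blk[of "int j" L c' "q'+e"] j by simp
    qed
    then show ?thesis using phi_sym_inj v v' by blast
  qed
  show ?thesis using kk blkeq[of "-1"] blkeq[of 0] blkeq[of 1] by simp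
qed


definition W :: "nat \<Rightarrow> (int \<Rightarrow> nat) \<Rightarrow> int \<Rightarrow> bool list" where
  "W L c n = map (\<lambda>i. phi_conf L c (n+i)) [- int (2*(L+2)) .. int (2*(L+2))]"

lemma out_eq:
  assumes "0 \<le> k" "k < int L + 2"
  shows "phi_conf L (ca_step 1 \<delta> c) ((int L+2)*q+k) = phi_sym L (\<delta> [c(q-1), c q, c(q+1)]) ! nat k"
  by (metis phi_conf_blk[OF assms] step_eq)

lemma claim:
  fixes c c' :: "int \<Rightarrow> nat"
  assumes v: "\<forall>u. c u < L" and v': "\<forall>u. c' u < L" and z: "\<delta> [0,0,0] = 0"
    and w: "W L c n = W L c' n'"
  shows "phi_conf L (ca_step 1 \<delta> c) n = phi_conf L (ca_step 1 \<delta> c') n'"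
proof -
  define q where "q = n div (int L + 2)"
  define k where "k = n mod (int L + 2)"
  define q' where "q' = n' div (int L + 2)"
  define k' where "k' = n' mod (int L + 2)"
  have n: "n = (int L+2)*q+k" by (simp add: q_def k_def)
  have n': "n' = (int L+2)*q'+k'" by (simp add: q'_def k'_def)
  have k: "0 \<le> k" "k < int L + 2" "0 \<le> k'" "k' < int L + 2" by (simp_all add: k_def k'_def)
  have hw: "phi_conf L c ((int L+2)*q+k+i) = phi_conf L c' ((int L+2)*q'+k'+i)"
    if "-2*(int L+2) \<le> i" "i \<le> 2*(int L+2)" for i
    using win[OF w[unfolded W_def], of i] that n n' by simp
  have hw': "phi_conf L c' ((int L+2)*q'+k'+i) = phi_conf L c ((int L+2)*q+k+i)"
    if "-2*(int L+2) \<le> i" "i \<le> 2*(int L+2)" for i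
    using hw[OF that] by simp
  show ?thesis
  proof (cases "\<exists>d\<in>{-1,0,1}. c (q+d) \<noteq> 0")
    case True
    then obtain d where "d \<in> {-1,0,1}" "c (q+d) \<noteq> 0" by blast
    from keyA[OF v v' k hw this] show ?thesis
      using n n' out_eq[OF k(1,2), of \<delta> c q] out_eq[OF k(3,4), of \<delta> c' q'] by simp
  next
    case F1: False
    show ?thesis
    proof (cases "\<exists>d\<in>{-1,0,1}. c' (q'+d) \<noteq> 0")
      case True
      then obtain d where "d \<in> {-1,0,1}" "c' (q'+d) \<noteq> 0" by blast
      from keyA[OF v' v k(3,4) k(1,2) hw' this] show ?thesis
        using n n' out_eq[OF k(1,2), of \<delta> c q] out_eq[OF k(3,4), of \<delta> c' q'] by simp
    next
      case False
      have "nat k < L + 2" "nat k' < L+2" using k by auto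
      then show ?thesis using F1 False z
        n n' out_eq[OF k(1,2), of \<delta> c q] out_eq[OF k(3,4), of \<delta> c' q']
        phi_sym_nth[of 0 L "nat k"] phi_sym_nth[of 0 L "nat k'"] by auto
    qed
  qed
qed

definition D :: "nat \<Rightarrow> (nat list \<Rightarrow> nat) \<Rightarrow> bool list \<Rightarrow> bool" where
  "D L \<delta> w = (\<exists>c n. (\<forall>u. c u < L) \<and> W L c n = w \<and> phi_conf L (ca_step 1 \<delta> c) n)"

lemma D_W:
  assumes v: "\<forall>u. c u < L" and z: "\<delta> [0,0,0] = 0"
  shows "D L \<delta> (W L c n) = phi_conf L (ca_step 1 \<delta> c) n"
proof
  assume "D L \<delta> (W L c n)"
  then obtain c' n' where "\<forall>u. c' u < L" "W L c' n' = W L c n" "phi_conf L (ca_step 1 \<delta> c') n'"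
    unfolding D_def by blast
  then show "phi_conf L (ca_step 1 \<delta> c) n" using claim[of c' L c \<delta> n' n] v z by simp
next
  assume "phi_conf L (ca_step 1 \<delta> c) n"
  then show "D L \<delta> (W L c n)" using v unfolding D_def by blast
qed

lemma step_phi:
  assumes v: "\<forall>u. c u < L" and z: "\<delta> [0,0,0] = 0"
  shows "ca_step (2*(L+2)) (D L \<delta>) (phi_conf L c) = phi_conf L (ca_step 1 \<delta> c)"
proof
  fix u
  have "ca_step (2*(L+2)) (D L \<delta>) (phi_conf L c) u = D L \<delta> (W L c u)"
    by (simp add: ca_step_def W_def)
  then show "ca_step (2*(L+2)) (D L \<delta>) (phi_conf L c) u = phi_conf L (ca_step 1 \<delta> c) u"
    using D_W[of c L \<delta> u] v z by simp
qed

theorem lemma1: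
  fixes L :: nat and \<delta>' :: "nat list \<Rightarrow> nat"
  assumes "L \<ge> 2"
    and "\<And>xs. length xs = 3 \<Longrightarrow> set xs \<subseteq> {..<L} \<Longrightarrow> \<delta>' xs < L"
    and "\<delta>' [0, 0, 0] = 0"
  shows "\<exists>\<delta>2 :: bool list \<Rightarrow> bool.
           \<delta>2 (replicate (2 * (2 * (L + 2)) + 1) True) = True \<and>
           (\<forall>t. ca_run (2 * (L + 2)) \<delta>2 (phi_conf L (\<lambda>u. if u = 0 then 1 else 0)) t
                = phi_conf L (ca_run 1 \<delta>' (\<lambda>u. if u = 0 then 1 else 0) t))"
proof (intro exI conjI)
  let ?z = "\<lambda>u::int. 0::nat"
  have vz: "\<forall>u. ?z u < L" using assms(1) by simp
  have allT: "W L ?z 0 = replicate (2 * (2 * (L + 2)) + 1) True"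
  proof -
    have "phi_conf L ?z i" for i
    proof -
      have "nat (i mod int (L+2)) < L+2" by (simp add: nat_less_iff)
      then show ?thesis using phi_sym_nth[of 0 L "nat (i mod int (L+2))"] unfolding phi_conf_def by (simp; linarith)
    qed
    then have "map (\<lambda>i. phi_conf L ?z (0+i)) [- int (2*(L+2)) .. int (2*(L+2))]
        = map (\<lambda>_. True) [- int (2*(L+2)) .. int (2*(L+2))]" by simp
    also have "\<dots> = replicate (length [- int (2*(L+2)) .. int (2*(L+2))]) True"
      by (rule map_replicate_const)
    also have "length [- int (2*(L+2)) .. int (2*(L+2))] = 2 * (2 * (L + 2)) + 1"
      by (simp only: length_upto)
    finally show ?thesis unfolding W_def .
  qed
  show "D L \<delta>' (replicate (2 * (2 * (L + 2)) + 1) True) = True"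
    using D_W[of ?z L \<delta>' 0] vz assms(3) allT
    phi_conf_blk[of 0 L "ca_step 1 \<delta>' ?z" 0] step_eq[of \<delta>' ?z 0] assms(3) phi_sym_nth[of 0 L 0]
    by simp
  show "\<forall>t. ca_run (2 * (L + 2)) (D L \<delta>') (phi_conf L (\<lambda>u. if u = 0 then 1 else 0)) t
                = phi_conf L (ca_run 1 \<delta>' (\<lambda>u. if u = 0 then 1 else 0) t)"
  proof
    fix t
    have "ca_run (2 * (L + 2)) (D L \<delta>') (phi_conf L (\<lambda>u. if u = 0 then 1 else 0)) t
                = phi_conf L (ca_run 1 \<delta>' (\<lambda>u. if u = 0 then 1 else 0) t)
          \<and> (\<forall>u. ca_run 1 \<delta>' (\<lambda>u. if u = 0 then 1 else 0) t u < L)"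
    proof (induction t)
      case 0
      then show ?case using assms(1) by (simp add: ca_run_def)
    next
      case (Suc t)
      let ?c = "ca_run 1 \<delta>' (\<lambda>u. if u = 0 then 1 else 0) t"
      have r1: "ca_run 1 \<delta>' (\<lambda>u. if u = 0 then 1 else 0) (Suc t) = ca_step 1 \<delta>' ?c"
        by (simp add: ca_run_def)
      have r2: "ca_run (2 * (L + 2)) (D L \<delta>') (phi_conf L (\<lambda>u. if u = 0 then 1 else 0)) (Suc t)
         = ca_step (2 * (L + 2)) (D L \<delta>') (ca_run (2 * (L + 2)) (D L \<delta>') (phi_conf L (\<lambda>u. if u = 0 then 1 else 0)) t)"
        by (simp add: ca_run_def)
      have v: "\<forall>u. ?c u < L" using Suc.IH by blast
      have v2: "\<forall>u. ca_step 1 \<delta>' ?c u < L"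
      proof
        fix u
        show "ca_step 1 \<delta>' ?c u < L" unfolding step_eq
          by (rule assms(2)) (use v in auto)
      qed
      show ?case using r1 r2 Suc.IH step_phi[of ?c L \<delta>'] v assms(3) v2 by simp
    qed
    then show "ca_run (2 * (L + 2)) (D L \<delta>') (phi_conf L (\<lambda>u. if u = 0 then 1 else 0)) t
                = phi_conf L (ca_run 1 \<delta>' (\<lambda>u. if u = 0 then 1 else 0) t)" by blast
  qed
qed

end
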